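(* (a) Let $\alpha\in(1/2,1)$ and $C>1$. Among probability distributions $p$ on $\{1,2,\dots\}$ with $\sum_k p_k k^\alpha \le C$, a maximizer of $H_\alpha(p)$ satisfies $p_k^{\alpha-1} = (\lambda k^\alpha+\mu)/\alpha$ for constants $\lambda>0,\mu$; it has infinite support and polynomial tail $p_k \asymp k^{-\alpha/(1-\alpha)}$ as $k\to\infty$ (normalizability of this form requiring $\alpha/(1-\alpha)>1$, i.e. $\alpha>1/2$). (b) Let $\alpha>1$ and $C>0$. Among probability distributions $p$ on $\{1,2,\dots\}$ with $\sum_k p_k \log k\le C$, a maximizer of $H_\alpha(p)$ satisfies $p_k^{\alpha-1} = [-(\lambda\log k+\mu)/\alpha]^+$ for constants $\lambda,\mu$ with $\lambda>0$, and hence has finite support $\{1,\dots,K_{\max}\}$.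
   Context: All logarithms are base 2; $[u]^+=\max\{u,0\}$. Rényi entropy of a distribution $p$ on a countable set: $H_\alpha(p) := \frac{1}{1-\alpha}\log\sum_k p_k^\alpha$ for $\alpha\in(0,1)\cup(1,\infty)$. *)

theory Defs
  imports "HOL-Analysis.Analysis" "HOL-Library.Landau_Symbols"
begin

text \<open>A probability distribution on the positive integers {1,2,...}, represented as a
  function on nat vanishing at 0.\<close>
definition pos_int_dist :: "(nat \<Rightarrow> real) \<Rightarrow> bool" where
  "pos_int_dist p \<longleftrightarrow> p 0 = 0 \<and> (\<forall>k. p k \<ge> 0) \<and> p sums 1"

text \<open>Renyi entropy (base 2), extended-real valued: the series of p_k^alpha has nonnegative
  terms, so if it diverges (possible only for alpha < 1) the entropy is +infinity.\<close>
definition renyi_entropy :: "real \<Rightarrow> (nat \<Rightarrow> real) \<Rightarrow> ereal" where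
  "renyi_entropy \<alpha> p =
     (if summable (\<lambda>k. p k powr \<alpha>)
      then ereal (1 / (1 - \<alpha>) * log 2 (\<Sum>k. p k powr \<alpha>))
      else PInfty)"

text \<open>Moment constraint sum_k p_k f(k) <= C (a divergent nonnegative series is +infinity,
  hence violates the constraint).\<close>
definition moment_le :: "(nat \<Rightarrow> real) \<Rightarrow> (nat \<Rightarrow> real) \<Rightarrow> real \<Rightarrow> bool" where
  "moment_le f p C \<longleftrightarrow> summable (\<lambda>k. p k * f k) \<and> (\<Sum>k. p k * f k) \<le> C"

definition renyi_maximizer :: "real \<Rightarrow> (nat \<Rightarrow> real) \<Rightarrow> real \<Rightarrow> (nat \<Rightarrow> real) \<Rightarrow> bool" where
  "renyi_maximizer \<alpha> f C p \<longleftrightarrow>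
     pos_int_dist p \<and> moment_le f p C \<and> renyi_entropy \<alpha> p \<noteq> PInfty \<and>
     (\<forall>q. pos_int_dist q \<and> moment_le f q C \<longrightarrow> renyi_entropy \<alpha> q \<le> renyi_entropy \<alpha> p)"

end

theory Submission
  imports Defs "HOL-Real_Asymp.Real_Asymp"
begin


lemma sum_pos_exists:
  assumes "pos_int_dist p" obtains i where "p i > 0"
proof -
  have "\<exists>i. p i > 0"
  proof (rule ccontr)
    assume "\<not> (\<exists>i. p i > 0)"
    with assms have "\<And>i. p i = 0" unfolding pos_int_dist_def by (meson linorder_not_le order_antisym)
    hence "p = (\<lambda>_. 0)" by auto
    hence "p sums 0" by simp
    with assms show False unfolding pos_int_dist_def using sums_unique2 by fastforce
  qed
  thus ?thesis using that by blast
qed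

lemma compare:
  assumes M: "renyi_maximizer \<alpha> g C p" and a0: "0 < \<alpha>" "\<alpha> \<noteq> 1"
    and W: "finite W" "0 \<notin> W" "\<forall>k\<in>W. p k + w k \<ge> 0" "sum w W = 0"
    and mom: "(\<Sum>k. p k * g k) + (\<Sum>k\<in>W. w k * g k) \<le> C"
  shows "(\<alpha> < 1 \<longrightarrow> (\<Sum>k\<in>W. (p k + w k) powr \<alpha>) \<le> (\<Sum>k\<in>W. p k powr \<alpha>)) \<and>
         (\<alpha> > 1 \<longrightarrow> (\<Sum>k\<in>W. (p k + w k) powr \<alpha>) \<ge> (\<Sum>k\<in>W. p k powr \<alpha>))"
proof -
  define w' where "w' k = (if k \<in> W then w k else 0)" for k
  define q where "q k = p k + w' k" for k
  from M have pd: "pos_int_dist p" and pm: "moment_le g p C" and pf: "renyi_entropy \<alpha> p \<noteq> PInfty"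
    and pmax: "\<And>q. pos_int_dist q \<Longrightarrow> moment_le g q C \<Longrightarrow> renyi_entropy \<alpha> q \<le> renyi_entropy \<alpha> p"
    unfolding renyi_maximizer_def by auto
  have p0: "p 0 = 0" and pnn: "\<And>k. p k \<ge> 0" and ps: "p sums 1" using pd unfolding pos_int_dist_def by auto
  have "w' sums (sum w' W)" by (rule sums_finite) (use W in \<open>auto simp: w'_def\<close>)
  moreover have "sum w' W = 0" using W by (simp add: w'_def)
  ultimately have "q sums 1" using sums_add[OF ps] unfolding q_def by fastforce
  moreover have "q 0 = 0" using p0 W by (simp add: q_def w'_def)
  moreover have "q k \<ge> 0" for k using W pnn by (auto simp: q_def w'_def)
  ultimately have qd: "pos_int_dist q" unfolding pos_int_dist_def by auto
  have sg: "(\<lambda>k. w' k * g k) sums (\<Sum>k\<in>W. w k * g k)"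
  proof -
    have "(\<lambda>k. w' k * g k) sums (\<Sum>k\<in>W. w' k * g k)" by (rule sums_finite) (use W in \<open>auto simp: w'_def\<close>)
    moreover have "(\<Sum>k\<in>W. w' k * g k) = (\<Sum>k\<in>W. w k * g k)" by (rule sum.cong) (auto simp: w'_def)
    ultimately show ?thesis by simp
  qed
  have pgs: "(\<lambda>k. p k * g k) sums (\<Sum>k. p k * g k)" using pm unfolding moment_le_def by (simp add: summable_sums)
  have "(\<lambda>k. q k * g k) sums ((\<Sum>k. p k * g k) + (\<Sum>k\<in>W. w k * g k))"
    using sums_add[OF pgs sg] by (simp add: q_def distrib_right)
  hence qm: "moment_le g q C" unfolding moment_le_def using mom by (simp add: sums_iff)
  have le: "renyi_entropy \<alpha> q \<le> renyi_entropy \<alpha> p" using pmax[OF qd qm] .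
  define D where "D = (\<Sum>k\<in>W. (p k + w k) powr \<alpha> - p k powr \<alpha>)"
  have sp: "summable (\<lambda>k. p k powr \<alpha>)" using pf unfolding renyi_entropy_def by (auto split: if_splits)
  have sd: "(\<lambda>k. if k \<in> W then (p k + w k) powr \<alpha> - p k powr \<alpha> else 0) sums D"
  proof -
    have "(\<lambda>k. if k \<in> W then (p k + w k) powr \<alpha> - p k powr \<alpha> else 0) sums
       (\<Sum>k\<in>W. (if k \<in> W then (p k + w k) powr \<alpha> - p k powr \<alpha> else 0))"
      by (rule sums_finite) (use W in auto)
    thus ?thesis unfolding D_def by simp
  qed
  have qeq: "(\<lambda>k. q k powr \<alpha>) = (\<lambda>k. p k powr \<alpha> + (if k \<in> W then (p k + w k) powr \<alpha> - p k powr \<alpha> else 0))"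
    by (auto simp: q_def w'_def)
  have qs: "(\<lambda>k. q k powr \<alpha>) sums ((\<Sum>k. p k powr \<alpha>) + D)"
    unfolding qeq by (rule sums_add[OF summable_sums[OF sp] sd])
  obtain i where pi: "p i > 0" using sum_pos_exists[OF pd] by blast
  have Sp: "(\<Sum>k. p k powr \<alpha>) > 0"
    by (rule suminf_pos2[OF sp, of i]) (use pi in auto)
  obtain j where qj: "q j > 0" using sum_pos_exists[OF qd] by blast
  have Sq: "(\<Sum>k. p k powr \<alpha>) + D > 0"
    using suminf_pos2[OF sums_summable[OF qs], of j] qj sums_unique[OF qs] by auto
  have "1 / (1 - \<alpha>) * log 2 ((\<Sum>k. p k powr \<alpha>) + D) \<le> 1 / (1 - \<alpha>) * log 2 (\<Sum>k. p k powr \<alpha>)"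
  proof -
    have "summable (\<lambda>k. q k powr \<alpha>)" "(\<Sum>k. q k powr \<alpha>) = (\<Sum>k. p k powr \<alpha>) + D"
      using qs by (auto simp: sums_iff)
    with le sp show ?thesis unfolding renyi_entropy_def by simp
  qed
  hence key: "(\<alpha> < 1 \<longrightarrow> D \<le> 0) \<and> (\<alpha> > 1 \<longrightarrow> D \<ge> 0)"
  proof -
    assume h: "1 / (1 - \<alpha>) * log 2 ((\<Sum>k. p k powr \<alpha>) + D) \<le> 1 / (1 - \<alpha>) * log 2 (\<Sum>k. p k powr \<alpha>)"
    show ?thesis
    proof (intro conjI impI)
      assume "\<alpha> < 1"
      hence "1 / (1 - \<alpha>) > 0" by simp
      hence "log 2 ((\<Sum>k. p k powr \<alpha>) + D) \<le> log 2 (\<Sum>k. p k powr \<alpha>)" using h \<open>\<alpha> < 1\<close> by (simp add: divide_le_cancel)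
      thus "D \<le> 0" using Sp Sq by simp
    next
      assume "\<alpha> > 1"
      hence "1 / (1 - \<alpha>) < 0" by simp
      hence "log 2 ((\<Sum>k. p k powr \<alpha>) + D) \<ge> log 2 (\<Sum>k. p k powr \<alpha>)" using h \<open>\<alpha> > 1\<close>
        by (simp add: divide_le_cancel)
      thus "D \<ge> 0" using Sp Sq by simp
    qed
  qed
  have "D = (\<Sum>k\<in>W. (p k + w k) powr \<alpha>) - (\<Sum>k\<in>W. p k powr \<alpha>)" unfolding D_def by (simp add: sum_subtractf)
  with key show ?thesis by auto
qed

lemma deriv_h:
  fixes p v :: "nat \<Rightarrow> real"
  assumes "finite W" "\<forall>k\<in>W. p k > 0"
  shows "((\<lambda>t. \<Sum>k\<in>W. (p k + t * v k) powr \<alpha>) has_real_derivative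
           (\<Sum>k\<in>W. \<alpha> * p k powr (\<alpha> - 1) * v k)) (at 0)"
proof (rule DERIV_sum)
  fix k assume "k \<in> W"
  hence pk: "p k > 0" using assms by auto
  have "((\<lambda>t. p k + t * v k) has_real_derivative v k) (at 0)"
    by (auto intro!: derivative_eq_intros)
  from DERIV_fun_powr[OF this, of \<alpha>] pk
  show "((\<lambda>t. (p k + t * v k) powr \<alpha>) has_real_derivative \<alpha> * p k powr (\<alpha> - 1) * v k) (at 0)"
    by simp
qed

lemma ev_pos:
  fixes p v :: "nat \<Rightarrow> real"
  assumes "finite W" "\<forall>k\<in>W. p k > 0"
  shows "\<exists>d>0. \<forall>t. \<bar>t\<bar> < d \<longrightarrow> (\<forall>k\<in>W. p k + t * v k > 0)"
proof -
  have "\<forall>\<^sub>F t in nhds 0. \<forall>k\<in>W. p k + t * v k > 0"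
  proof (rule eventually_ball_finite[OF assms(1)], rule ballI)
    fix k assume "k \<in> W"
    have "((\<lambda>t. p k + t * v k) \<longlongrightarrow> p k + 0 * v k) (nhds 0)"
      by (intro tendsto_intros) (rule filterlim_ident)
    thus "\<forall>\<^sub>F t in nhds 0. p k + t * v k > 0"
      using order_tendstoD(1)[of _ "p k" _ 0] assms \<open>k \<in> W\<close> by auto
  qed
  thus ?thesis unfolding eventually_nhds_metric dist_real_def by auto
qed

lemma twosided:
  assumes M: "renyi_maximizer \<alpha> g C p" and a0: "0 < \<alpha>" "\<alpha> \<noteq> 1"
    and W: "finite W" "0 \<notin> W" "\<forall>k\<in>W. p k > 0" "sum v W = 0" "(\<Sum>k\<in>W. v k * g k) = 0"
  shows "(\<Sum>k\<in>W. v k * p k powr (\<alpha> - 1)) = 0"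
proof -
  define f where "f t = (\<Sum>k\<in>W. (p k + t * v k) powr \<alpha>)" for t
  have D: "(f has_real_derivative (\<Sum>k\<in>W. \<alpha> * p k powr (\<alpha> - 1) * v k)) (at 0)"
    unfolding f_def by (rule deriv_h) (use W in auto)
  obtain d where d: "d > 0" "\<forall>t. \<bar>t\<bar> < d \<longrightarrow> (\<forall>k\<in>W. p k + t * v k > 0)"
    using ev_pos[OF W(1) W(3)] by blast
  have mp: "(\<Sum>k. p k * g k) \<le> C" using M unfolding renyi_maximizer_def moment_le_def by auto
  have cmp: "(\<alpha> < 1 \<longrightarrow> f t \<le> f 0) \<and> (\<alpha> > 1 \<longrightarrow> f t \<ge> f 0)" if "\<bar>t\<bar> < d" for t
  proof -
    have "sum (\<lambda>k. t * v k) W = 0" using W by (simp add: sum_distrib_left[symmetric])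
    moreover have "(\<Sum>k\<in>W. t * v k * g k) = 0" using W
      by (simp add: sum_distrib_left[symmetric] mult.assoc)
    moreover have "\<forall>k\<in>W. p k + t * v k \<ge> 0" using d that by (auto intro: less_imp_le)
    ultimately show ?thesis
      using compare[OF M a0 W(1,2), of "\<lambda>k. t * v k"] mp unfolding f_def by auto
  qed
  have "(\<Sum>k\<in>W. \<alpha> * p k powr (\<alpha> - 1) * v k) = 0"
  proof (cases "\<alpha> < 1")
    case True
    show ?thesis by (rule DERIV_local_max[OF D d(1)]) (use cmp True in auto)
  next
    case False
    hence "\<alpha> > 1" using a0 by auto
    show ?thesis by (rule DERIV_local_min[OF D d(1)]) (use cmp \<open>\<alpha> > 1\<close> in auto)
  qed
  hence "\<alpha> * (\<Sum>k\<in>W. v k * p k powr (\<alpha> - 1)) = 0"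
    by (simp add: sum_distrib_left mult_ac)
  thus ?thesis using a0 by simp
qed

lemma onesided:
  assumes M: "renyi_maximizer \<alpha> g C p" and a0: "0 < \<alpha>" "\<alpha> \<noteq> 1"
    and W: "finite W" "0 \<notin> W" "\<forall>k\<in>W. p k > 0" "1 + sum v W = 0"
    and j: "j \<notin> W" "j \<noteq> 0" "p j = 0"
    and d: "d > 0" "\<forall>t. 0 < t \<and> t < d \<longrightarrow> (\<Sum>k. p k * g k) + t * (g j + (\<Sum>k\<in>W. v k * g k)) \<le> C"
  shows "(\<alpha> < 1 \<longrightarrow> False) \<and> (\<alpha> > 1 \<longrightarrow> (\<Sum>k\<in>W. v k * p k powr (\<alpha> - 1)) \<ge> 0)"
proof -
  define h where "h t = (\<Sum>k\<in>W. (p k + t * v k) powr \<alpha>)" for t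
  define D where "D = (\<Sum>k\<in>W. \<alpha> * p k powr (\<alpha> - 1) * v k)"
  have Dh: "(h has_real_derivative D) (at 0)"
    unfolding h_def D_def by (rule deriv_h) (use W in auto)
  hence "(h has_real_derivative D) (at 0 within {0<..})" by (rule has_field_derivative_at_within)
  hence L: "((\<lambda>t. (h t - h 0) / t) \<longlongrightarrow> D) (at_right 0)"
    unfolding has_field_derivative_iff by simp
  obtain d2 where d2: "d2 > 0" "\<forall>t. \<bar>t\<bar> < d2 \<longrightarrow> (\<forall>k\<in>W. p k + t * v k > 0)"
    using ev_pos[OF W(1) W(3)] by blast
  have E1: "\<forall>\<^sub>F t in at_right 0. 0 < t \<and> t < d \<and> t < d2"
    unfolding eventually_at_right_field using d d2 by (intro exI[of _ "min d d2"]) auto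
  have cmp: "(\<alpha> < 1 \<longrightarrow> t powr \<alpha> + (h t - h 0) \<le> 0) \<and> (\<alpha> > 1 \<longrightarrow> t powr \<alpha> + (h t - h 0) \<ge> 0)"
    if t: "0 < t" "t < d" "t < d2" for t
  proof -
    define w where "w k = t * (if k = j then 1 else v k)" for k
    have fW: "finite (insert j W)" "0 \<notin> insert j W" using W j by auto
    have "sum w W = (\<Sum>k\<in>W. t * v k)"
      by (rule sum.cong) (use j in \<open>auto simp: w_def\<close>)
    hence "sum w (insert j W) = t + t * sum v W"
      using W j by (simp add: w_def sum_distrib_left)
    also have "\<dots> = t * (1 + sum v W)" by (simp add: distrib_left)
    finally have s0: "sum w (insert j W) = 0" using W by simp
    have "(\<Sum>k\<in>insert j W. w k * g k) = t * (g j + (\<Sum>k\<in>W. v k * g k))"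
    proof -
      have "(\<Sum>k\<in>W. w k * g k) = (\<Sum>k\<in>W. t * (v k * g k))"
        by (rule sum.cong) (use j in \<open>auto simp: w_def\<close>)
      thus ?thesis using W j by (simp add: w_def sum_distrib_left distrib_left)
    qed
    hence mom: "(\<Sum>k. p k * g k) + (\<Sum>k\<in>insert j W. w k * g k) \<le> C" using d t by simp
    have nn: "\<forall>k\<in>insert j W. p k + w k \<ge> 0"
      using d2 t j by (auto simp: w_def abs_of_pos intro: less_imp_le)
    have e1: "(\<Sum>k\<in>insert j W. (p k + w k) powr \<alpha>) = t powr \<alpha> + h t"
    proof -
      have "(\<Sum>k\<in>W. (p k + w k) powr \<alpha>) = h t" unfolding h_def
        by (rule sum.cong) (use j in \<open>auto simp: w_def\<close>)
      thus ?thesis using W j by (simp add: w_def)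
    qed
    have e2: "(\<Sum>k\<in>insert j W. p k powr \<alpha>) = h 0"
      using W j by (simp add: h_def)
    show ?thesis using compare[OF M a0 fW nn s0 mom] e1 e2 by auto
  qed
  have tp: "t powr \<alpha> + (h t - h 0) = t * (t powr (\<alpha> - 1) + (h t - h 0) / t)" if "t > 0" for t
  proof -
    have "t powr \<alpha> = t * t powr (\<alpha> - 1)" using that
      using powr_add[of t 1 "\<alpha> - 1"] by simp
    thus ?thesis using that by (simp add: field_simps)
  qed
  show ?thesis
  proof (intro conjI impI)
    assume a1: "\<alpha> < 1"
    have "filterlim (\<lambda>t. t powr (\<alpha> - 1)) at_top (at_right 0)" using a1 by real_asymp
    hence E2: "\<forall>\<^sub>F t in at_right 0. t powr (\<alpha> - 1) > 1 - D" by (simp add: filterlim_at_top_dense)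
    have E3: "\<forall>\<^sub>F t in at_right 0. (h t - h 0) / t > D - 1" using order_tendstoD(1)[OF L, of "D - 1"] by simp
    have "\<forall>\<^sub>F t in at_right 0. (0 < t \<and> t < d \<and> t < d2) \<and> t powr (\<alpha> - 1) > 1 - D \<and> (h t - h 0) / t > D - 1"
      using E1 E2 E3 by eventually_elim auto
    then obtain t where elim: "0 < t \<and> t < d \<and> t < d2" "t powr (\<alpha> - 1) > 1 - D" "(h t - h 0) / t > D - 1"
      using eventually_happens'[OF trivial_limit_at_right_real] by blast
    hence pos: "t powr (\<alpha> - 1) + (h t - h 0) / t > 0" by linarith
    have "t powr \<alpha> + (h t - h 0) > 0" unfolding tp[of t, OF conjunct1[OF elim(1)]]
      using mult_pos_pos[OF conjunct1[OF elim(1)] pos] .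
    thus False using cmp[of t] elim a1 by auto
  next
    assume a1: "\<alpha> > 1"
    have "D \<ge> 0"
    proof (rule ccontr)
      assume "\<not> D \<ge> 0"
      hence Dn: "D < 0" by simp
      have "((\<lambda>t. t powr (\<alpha> - 1)) \<longlongrightarrow> 0) (at_right 0)" using a1 by real_asymp
      hence E2: "\<forall>\<^sub>F t in at_right 0. t powr (\<alpha> - 1) < - D / 2" using Dn order_tendstoD(2) by fastforce
      have E3: "\<forall>\<^sub>F t in at_right 0. (h t - h 0) / t < D / 2" using order_tendstoD(2)[OF L, of "D / 2"] Dn by simp
      have "\<forall>\<^sub>F t in at_right 0. (0 < t \<and> t < d \<and> t < d2) \<and> t powr (\<alpha> - 1) < - D / 2 \<and> (h t - h 0) / t < D / 2"
        using E1 E2 E3 by eventually_elim auto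
      then obtain t where elim: "0 < t \<and> t < d \<and> t < d2" "t powr (\<alpha> - 1) < - D / 2" "(h t - h 0) / t < D / 2"
        using eventually_happens'[OF trivial_limit_at_right_real] by blast
      hence neg: "t powr (\<alpha> - 1) + (h t - h 0) / t < 0" by linarith
      have "t powr \<alpha> + (h t - h 0) < 0" unfolding tp[of t, OF conjunct1[OF elim(1)]]
        using mult_pos_neg[OF conjunct1[OF elim(1)] neg] .
      thus False using cmp[of t] elim a1 by auto
    qed
    hence "\<alpha> * (\<Sum>k\<in>W. v k * p k powr (\<alpha> - 1)) \<ge> 0"
      unfolding D_def by (simp add: sum_distrib_left mult_ac)
    thus "(\<Sum>k\<in>W. v k * p k powr (\<alpha> - 1)) \<ge> 0" using a0 by (simp add: zero_le_mult_iff)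
  qed
qed



lemma basic:
  assumes M: "renyi_maximizer \<alpha> g C p"
  shows "p 0 = 0" "\<And>k. p k \<ge> 0" "p sums 1" "(\<lambda>k. p k * g k) sums (\<Sum>k. p k * g k)" "(\<Sum>k. p k * g k) \<le> C"
  using M unfolding renyi_maximizer_def pos_int_dist_def moment_le_def by (auto simp: summable_sums)

lemma point_mass:
  assumes M: "renyi_maximizer \<alpha> g C p" and i: "\<And>k. k \<noteq> i \<Longrightarrow> p k = 0"
  shows "p i = 1" "(\<Sum>k. p k * g k) = g i"
proof -
  have "p sums (sum p {i})" by (rule sums_finite) (use i in auto)
  thus pi: "p i = 1" using basic(3)[OF M] sums_unique2 by fastforce
  have "(\<lambda>k. p k * g k) sums (\<Sum>k\<in>{i}. p k * g k)" by (rule sums_finite) (use i in auto)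
  thus "(\<Sum>k. p k * g k) = g i" using pi sums_unique by fastforce
qed

lemma partA:
  fixes \<alpha> C :: real and p :: "nat \<Rightarrow> real"
  assumes a: "1/2 < \<alpha>" "\<alpha> < 1" and C: "C > 1"
    and M: "renyi_maximizer \<alpha> (\<lambda>k. real k powr \<alpha>) C p"
  shows "(\<exists>lam mu::real. lam > 0 \<and>
          (\<forall>k\<ge>1. p k > 0 \<and> p k powr (\<alpha> - 1) = (lam * real k powr \<alpha> + mu) / \<alpha>)) \<and>
       infinite {k. p k > 0} \<and>
       p \<in> \<Theta>(\<lambda>k. real k powr (- \<alpha> / (1 - \<alpha>)))"
proof -
  define g where "g k = real k powr \<alpha>" for k :: nat
  have M': "renyi_maximizer \<alpha> g C p" using M unfolding g_def .
  have a0: "0 < \<alpha>" "\<alpha> \<noteq> 1" using a by auto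
  note B = basic[OF M']
  have g1: "g 1 = 1" by (simp add: g_def)
  have gge: "g k \<ge> 1" if "k \<ge> 1" for k using that a0 unfolding g_def by (simp add: ge_one_powr_ge_zero)
  have ggt: "g k > 1" if "k \<ge> 2" for k using that a0 unfolding g_def by simp
  have p1: "p 1 > 0"
  proof (rule ccontr)
    assume "\<not> p 1 > 0"
    hence p10: "p 1 = 0" using B(2)[of 1] by simp
    obtain m where m: "p m > 0" using sum_pos_exists M unfolding renyi_maximizer_def by blast
    have m1: "m \<noteq> 0" "m \<noteq> 1" using m p10 B(1) by (metis less_irrefl)+
    have "(\<alpha> < 1 \<longrightarrow> False)"
    proof (rule conjunct1[OF onesided[OF M' a0, of "{m}" "\<lambda>_. -1" 1 1]])
      show "\<forall>t. 0 < t \<and> t < 1 \<longrightarrow> (\<Sum>k. p k * g k) + t * (g 1 + (\<Sum>k\<in>{m}. - 1 * g k)) \<le> C"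
      proof (intro allI impI)
        fix t :: real assume "0 < t \<and> t < 1"
        moreover have "g m \<ge> 1" using gge m1 by simp
        ultimately have "t * (g 1 + (\<Sum>k\<in>{m}. - 1 * g k)) \<le> 0" using g1 by (simp add: mult_nonneg_nonpos)
        thus "(\<Sum>k. p k * g k) + t * (g 1 + (\<Sum>k\<in>{m}. - 1 * g k)) \<le> C" using B(5) by linarith
      qed
    qed (use m m1 p10 in auto)
    thus False using a by simp
  qed
  have ppos: "p j > 0" if "j \<ge> 1" for j
  proof (rule ccontr)
    assume "\<not> p j > 0"
    hence pj0: "p j = 0" using B(2)[of j] by simp
    with p1 have j2: "j \<ge> 2" using that by (cases "j = 1") auto
    show False
    proof (cases "\<exists>m\<ge>2. p m > 0")
      case True
      then obtain m where m: "m \<ge> 2" "p m > 0" by blast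
      have mj: "m \<noteq> j" using m pj0 by auto
      define vm where "vm = (1 - g j) / (g m - 1)"
      define v where "v k = (if k = m then vm else -1 - vm)" for k
      have gm: "g m - 1 > 0" using ggt[OF m(1)] by simp
      have mom0: "g j + (\<Sum>k\<in>{1, m}. v k * g k) = 0"
      proof -
        have m1: "m \<noteq> 1" using m by simp
        have "(\<Sum>k\<in>{1, m}. v k * g k) = (-1 - vm) * g 1 + vm * g m" using m1 by (simp add: v_def)
        also have "\<dots> = -1 + vm * (g m - 1)" using g1 by (simp add: algebra_simps)
        also have "vm * (g m - 1) = 1 - g j" using gm by (simp add: vm_def)
        finally show ?thesis by simp
      qed
      have "(\<alpha> < 1 \<longrightarrow> False)"
      proof (rule conjunct1[OF onesided[OF M' a0, of "{1, m}" v j 1]])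
        show "\<forall>t. 0 < t \<and> t < 1 \<longrightarrow> (\<Sum>k. p k * g k) + t * (g j + (\<Sum>k\<in>{1, m}. v k * g k)) \<le> C"
          using mom0 B(5) by simp
      qed (use m mj j2 pj0 p1 in \<open>auto simp: v_def\<close>)
      thus False using a by simp
    next
      case False
      hence z: "\<And>k. k \<noteq> 1 \<Longrightarrow> p k = 0" using B(1) B(2)
        by (metis One_nat_def Suc_1 less_2_cases_iff linorder_not_le order_less_le)
      have mom1: "(\<Sum>k. p k * g k) = 1" using point_mass(2)[OF M' z] g1 by simp
      have gj: "g j - 1 > 0" using ggt[OF j2] by simp
      define d where "d = (C - 1) / (g j - 1)"
      have d0: "d > 0" using C gj by (simp add: d_def)
      have "(\<alpha> < 1 \<longrightarrow> False)"
      proof (rule conjunct1[OF onesided[OF M' a0, of "{1}" "\<lambda>_. -1" j d]])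
        show "\<forall>t. 0 < t \<and> t < d \<longrightarrow> (\<Sum>k. p k * g k) + t * (g j + (\<Sum>k\<in>{1}. - 1 * g k)) \<le> C"
        proof (intro allI impI)
          fix t assume t: "0 < t \<and> t < d"
          hence "t * (g j - 1) \<le> d * (g j - 1)" using gj by (intro mult_right_mono) auto
          also have "\<dots> = C - 1" using gj by (simp add: d_def)
          finally show "(\<Sum>k. p k * g k) + t * (g j + (\<Sum>k\<in>{1}. - 1 * g k)) \<le> C"
            using mom1 g1 by simp
        qed
      qed (use d0 j2 pj0 p1 in auto)
      thus False using a by simp
    qed
  qed
  define c where "c k = p k powr (\<alpha> - 1)" for k
  have g2: "g 2 - 1 > 0" using ggt[of 2] by simp
  define aa where "aa = (c 2 - c 1) / (g 2 - 1)"
  define bb where "bb = c 1 - aa"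
  have aff: "c k = aa * g k + bb" if k: "k \<ge> 1" for k
  proof -
    consider "k = 1" | "k = 2" | "k \<ge> 3" using k by linarith
    thus ?thesis
    proof cases
      case 1 thus ?thesis using g1 by (simp add: bb_def)
    next
      case 2
      have "aa * (g 2 - 1) = c 2 - c 1" using g2 by (simp add: aa_def)
      hence "aa * g 2 + bb = c 2" by (simp add: bb_def algebra_simps)
      thus ?thesis using 2 by simp
    next
      case 3
      define v where "v i = (if i = 1 then g 2 - g k else if i = 2 then g k - g 1 else g 1 - g 2)" for i :: nat
      have "(\<Sum>i\<in>{1,2,k}. v i * p i powr (\<alpha> - 1)) = 0"
      proof (rule twosided[OF M' a0])
        show "\<forall>i\<in>{1,2,k}. p i > 0" using ppos 3 by auto
        show "sum v {1,2,k} = 0" using 3 by (simp add: v_def)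
        show "(\<Sum>i\<in>{1,2,k}. v i * g i) = 0" using 3 by (simp add: v_def algebra_simps)
      qed (use 3 in auto)
      hence "(g 2 - g k) * c 1 + (g k - 1) * c 2 + (1 - g 2) * c k = 0"
        using 3 g1 by (simp add: v_def c_def)
      hence e1: "(g 2 - 1) * c k = (g 2 - g k) * c 1 + (g k - 1) * c 2" by (simp add: algebra_simps)
      have ha: "aa * (g 2 - 1) = c 2 - c 1" using g2 by (simp add: aa_def)
      have "(g 2 - 1) * (aa * g k + bb) = aa * (g 2 - 1) * (g k - 1) + (g 2 - 1) * c 1"
        by (simp add: bb_def algebra_simps)
      also have "\<dots> = (g 2 - g k) * c 1 + (g k - 1) * c 2" unfolding ha by (simp add: algebra_simps)
      finally have "(g 2 - 1) * c k = (g 2 - 1) * (aa * g k + bb)" using e1 by simp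
      thus ?thesis using g2 by simp
    qed
  qed
  have cpos: "c k > 0" if "k \<ge> 1" for k using ppos[OF that] by (simp add: c_def)
  have aapos: "aa > 0"
  proof (rule ccontr)
    assume "\<not> aa > 0"
    hence an: "aa \<le> 0" by simp
    have bpos: "bb > 0" using cpos[of 1] aff[of 1] g1 an by simp
    have cle: "c k \<le> bb" if "k \<ge> 1" for k
    proof -
      have "aa * g k \<le> 0" using an gge[OF that] by (simp add: mult_nonpos_nonneg)
      thus ?thesis using aff[OF that] by simp
    qed
    define eps where "eps = bb powr (1 / (\<alpha> - 1))"
    have eps: "eps > 0" using bpos by (simp add: eps_def)
    have "p \<longlonglongrightarrow> 0" using B(3) by (simp add: sums_iff summable_LIMSEQ_zero)
    hence "\<forall>\<^sub>F k in sequentially. p k < eps" using eps order_tendstoD(2) by blast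
    moreover have "\<forall>\<^sub>F k in sequentially. k \<ge> 1" by (rule eventually_ge_at_top)
    ultimately have "\<forall>\<^sub>F k in sequentially. p k < eps \<and> k \<ge> 1" by eventually_elim auto
    then obtain k where k: "p k < eps" "k \<ge> 1" using eventually_happens'[OF sequentially_bot] by blast
    have "eps powr (\<alpha> - 1) < p k powr (\<alpha> - 1)"
      by (rule powr_less_mono2_neg) (use a ppos[OF k(2)] k in auto)
    moreover have "eps powr (\<alpha> - 1) = bb" using bpos a0 by (simp add: eps_def powr_powr)
    ultimately show False using cle[OF k(2)] by (simp add: c_def)
  qed
  have part1: "\<exists>lam mu::real. lam > 0 \<and>
          (\<forall>k\<ge>1. p k > 0 \<and> p k powr (\<alpha> - 1) = (lam * real k powr \<alpha> + mu) / \<alpha>)"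
  proof -
    have "\<forall>k\<ge>1. p k > 0 \<and> p k powr (\<alpha> - 1) = (\<alpha> * aa * real k powr \<alpha> + \<alpha> * bb) / \<alpha>"
    proof (intro allI impI conjI)
      fix k :: nat assume k: "k \<ge> 1"
      show "p k > 0" using ppos[OF k] .
      have "(\<alpha> * aa * real k powr \<alpha> + \<alpha> * bb) / \<alpha> = aa * g k + bb"
        using a0 by (simp add: g_def field_simps)
      thus "p k powr (\<alpha> - 1) = (\<alpha> * aa * real k powr \<alpha> + \<alpha> * bb) / \<alpha>"
        using aff[OF k] by (simp add: c_def)
    qed
    moreover have "\<alpha> * aa > 0" using a0 aapos by simp
    ultimately show ?thesis by blast
  qed
  have "{k. p k > 0} = {1..}"
  proof (intro set_eqI iffI)
    fix x assume "x \<in> {k. p k > 0}"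
    hence "x \<noteq> 0" using B(1) by (metis less_irrefl mem_Collect_eq)
    thus "x \<in> {1..}" by simp
  qed (use ppos in auto)
  hence part2: "infinite {k. p k > 0}" using infinite_Ici by simp
  define e where "e = 1 / (\<alpha> - 1)"
  have ratio: "p k / real k powr (- \<alpha> / (1 - \<alpha>)) = (aa + bb * real k powr (- \<alpha>)) powr e" if k: "k \<ge> 1" for k
  proof -
    have x: "real k > 0" using k by simp
    have pk: "p k = (aa * g k + bb) powr e"
    proof -
      have "(p k powr (\<alpha> - 1)) powr (1 / (\<alpha> - 1)) = p k"
        using ppos[OF k] a0 by (simp add: powr_powr)
      thus ?thesis using aff[OF k] by (simp add: c_def e_def)
    qed
    have den: "real k powr (- \<alpha> / (1 - \<alpha>)) = (g k) powr e"
    proof -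
      have h1: "1 - \<alpha> \<noteq> 0" "\<alpha> - 1 \<noteq> 0" using a0 by auto
      have "- \<alpha> / (1 - \<alpha>) = \<alpha> * (1 / (\<alpha> - 1))" using h1 by (simp add: field_simps)
      thus ?thesis by (simp add: g_def e_def powr_powr)
    qed
    have pos1: "aa * g k + bb > 0" using aff[OF k] cpos[OF k] by simp
    have "p k / real k powr (- \<alpha> / (1 - \<alpha>)) = ((aa * g k + bb) / g k) powr e"
      using pk den pos1 x by (simp add: powr_divide g_def)
    also have "(aa * g k + bb) / g k = aa + bb * real k powr (- \<alpha>)"
      using x by (simp add: g_def powr_minus field_simps)
    finally show ?thesis .
  qed
  have lim: "((\<lambda>k. (aa + bb * real k powr (- \<alpha>)) powr e) \<longlongrightarrow> aa powr e) at_top"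
    using aapos a unfolding e_def by real_asymp
  have "((\<lambda>k. p k / real k powr (- \<alpha> / (1 - \<alpha>))) \<longlongrightarrow> aa powr e) at_top"
  proof (rule Lim_transform_eventually[OF lim])
    show "\<forall>\<^sub>F k in at_top. (aa + bb * real k powr (- \<alpha>)) powr e = p k / real k powr (- \<alpha> / (1 - \<alpha>))"
      using eventually_ge_at_top[of 1] by eventually_elim (use ratio in presburger)
  qed
  hence part3: "p \<in> \<Theta>(\<lambda>k. real k powr (- \<alpha> / (1 - \<alpha>)))"
    by (rule bigthetaI_tendsto[rotated]) (use aapos in simp)
  show ?thesis using part1 part2 part3 by blast
qed



lemma partB:
  fixes \<alpha> C :: real and p :: "nat \<Rightarrow> real"
  assumes a: "\<alpha> > 1" and C: "C > 0"
    and M: "renyi_maximizer \<alpha> (\<lambda>k. log 2 (real k)) C p"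
  shows "(\<exists>lam mu::real. lam > 0 \<and>
          (\<forall>k\<ge>1. p k powr (\<alpha> - 1) = max (- (lam * log 2 (real k) + mu) / \<alpha>) 0)) \<and>
       (\<exists>Kmax\<ge>1. {k. p k > 0} = {1..Kmax})"
proof -
  define g where "g k = log 2 (real k)" for k :: nat
  have M': "renyi_maximizer \<alpha> g C p" using M unfolding g_def .
  have a0: "0 < \<alpha>" "\<alpha> \<noteq> 1" using a by auto
  note B = basic[OF M']
  define P where "P = {k. p k > 0}"
  have P0: "0 \<notin> P" using B(1) by (simp add: P_def)
  have notP: "p k = 0" if "k \<notin> P" for k using that B(2)[of k] by (simp add: P_def)
  have g1: "g 1 = 0" by (simp add: g_def)
  have gmono: "g k \<le> g l" if "1 \<le> k" "k \<le> l" for k l using that by (simp add: g_def)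
  have gsmono: "g k < g l" if "1 \<le> k" "k < l" for k l using that by (simp add: g_def)
  have gnn: "g k \<ge> 0" if "k \<ge> 1" for k using gmono[OF order.refl that] g1 by simp
  define c where "c k = p k powr (\<alpha> - 1)" for k
  have cP: "c k > 0" if "k \<in> P" for k using that by (simp add: c_def P_def)
  have Pge1: "k \<ge> 1" if "k \<in> P" for k using that P0 by (cases k) auto
  obtain i where iP: "i \<in> P" using sum_pos_exists M unfolding renyi_maximizer_def P_def by blast
  have two: "\<exists>i'. i' \<in> P \<and> i' \<noteq> i"
  proof (rule ccontr)
    assume "\<not> (\<exists>i'. i' \<in> P \<and> i' \<noteq> i)"
    hence z: "\<And>k. k \<noteq> i \<Longrightarrow> p k = 0" using notP by blast
    have pi: "p i = 1" and mi: "(\<Sum>k. p k * g k) = g i" using point_mass[OF M' z] by auto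
    have ci: "c i = 1" using pi by (simp add: c_def)
    show False
    proof (cases "i = 1")
      case True
      have "\<alpha> > 1 \<longrightarrow> (\<Sum>k\<in>{1}. -1 * p k powr (\<alpha> - 1)) \<ge> 0"
      proof (rule conjunct2[OF onesided[OF M' a0, of "{1}" "\<lambda>_. -1" 2 C]])
        show "\<forall>t. 0 < t \<and> t < C \<longrightarrow> (\<Sum>k. p k * g k) + t * (g 2 + (\<Sum>k\<in>{1}. -1 * g k)) \<le> C"
          using mi True g1 by (simp add: g_def)
      qed (use True iP P0 C z in \<open>auto simp: P_def\<close>)
      thus False using a ci True by (simp add: c_def)
    next
      case False
      have i1: "i \<ge> 1" using Pge1[OF iP] .
      have "\<alpha> > 1 \<longrightarrow> (\<Sum>k\<in>{i}. -1 * p k powr (\<alpha> - 1)) \<ge> 0"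
      proof (rule conjunct2[OF onesided[OF M' a0, of "{i}" "\<lambda>_. -1" 1 1]])
        show "\<forall>t. 0 < t \<and> t < 1 \<longrightarrow> (\<Sum>k. p k * g k) + t * (g 1 + (\<Sum>k\<in>{i}. -1 * g k)) \<le> C"
        proof (intro allI impI)
          fix t :: real assume "0 < t \<and> t < 1"
          hence "t * g i \<ge> 0" using gnn[OF i1] by simp
          thus "(\<Sum>k. p k * g k) + t * (g 1 + (\<Sum>k\<in>{i}. -1 * g k)) \<le> C" using B(5) g1 by simp
        qed
      qed (use False iP P0 z i1 in \<open>auto simp: P_def\<close>)
      thus False using a ci by (simp add: c_def)
    qed
  qed
  then obtain i' where i'P: "i' \<in> P" "i' \<noteq> i" by blast
  define i0 where "i0 = min i i'"
  define i1 where "i1 = max i i'"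
  have i01: "i0 \<in> P" "i1 \<in> P" "i0 < i1" using iP i'P by (auto simp: i0_def i1_def min_def max_def)
  have i0g: "i0 \<ge> 1" using Pge1 i01 by auto
  have gd: "g i1 - g i0 > 0" using gsmono[OF i0g i01(3)] by simp
  define aa where "aa = (c i1 - c i0) / (g i1 - g i0)"
  define bb where "bb = c i0 - aa * g i0"
  have ha: "aa * (g i1 - g i0) = c i1 - c i0" using gd by (simp add: aa_def)
  have aff: "c k = aa * g k + bb" if k: "k \<in> P" for k
  proof (cases "k = i0 \<or> k = i1")
    case True
    thus ?thesis
    proof
      assume "k = i0" thus ?thesis by (simp add: bb_def)
    next
      assume "k = i1"
      have "aa * g i1 + bb = aa * (g i1 - g i0) + c i0" by (simp add: bb_def algebra_simps)
      thus ?thesis using ha \<open>k = i1\<close> by simp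
    qed
  next
    case False
    hence kn: "k \<noteq> i0" "k \<noteq> i1" by auto
    define v where "v l = (if l = i0 then g i1 - g k else if l = i1 then g k - g i0 else g i0 - g i1)" for l :: nat
    have "(\<Sum>l\<in>{i0,i1,k}. v l * p l powr (\<alpha> - 1)) = 0"
    proof (rule twosided[OF M' a0])
      show "\<forall>l\<in>{i0,i1,k}. p l > 0" using i01 k by (auto simp: P_def)
      show "sum v {i0,i1,k} = 0" using kn i01 by (simp add: v_def)
      show "(\<Sum>l\<in>{i0,i1,k}. v l * g l) = 0" using kn i01 by (simp add: v_def algebra_simps)
    qed (use P0 i01 k Pge1[OF k] i0g in auto)
    hence "(g i1 - g k) * c i0 + (g k - g i0) * c i1 + (g i0 - g i1) * c k = 0"
      using kn i01 by (simp add: v_def c_def)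
    hence e1: "(g i1 - g i0) * c k = (g i1 - g k) * c i0 + (g k - g i0) * c i1" by (simp add: algebra_simps)
    have "(g i1 - g i0) * (aa * g k + bb) = aa * (g i1 - g i0) * (g k - g i0) + (g i1 - g i0) * c i0"
      by (simp add: bb_def algebra_simps)
    also have "\<dots> = (g i1 - g k) * c i0 + (g k - g i0) * c i1" unfolding ha by (simp add: algebra_simps)
    finally have "(g i1 - g i0) * c k = (g i1 - g i0) * (aa * g k + bb)" using e1 by simp
    thus ?thesis using gd by simp
  qed
  have outside: "aa * g j + bb \<le> 0" if j: "j \<notin> P" "j \<ge> 1" for j
  proof -
    define vm where "vm = (g i0 - g j) / (g i1 - g i0)"
    define v where "v l = (if l = i1 then vm else -1 - vm)" for l :: nat
    have hv: "vm * (g i1 - g i0) = g i0 - g j" using gd by (simp add: vm_def)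
    have mom0: "g j + (\<Sum>l\<in>{i0, i1}. v l * g l) = 0"
    proof -
      have "(\<Sum>l\<in>{i0, i1}. v l * g l) = (-1 - vm) * g i0 + vm * g i1" using i01 by (simp add: v_def)
      also have "\<dots> = - g i0 + vm * (g i1 - g i0)" by (simp add: algebra_simps)
      finally show ?thesis using hv by simp
    qed
    have "\<alpha> > 1 \<longrightarrow> (\<Sum>l\<in>{i0, i1}. v l * p l powr (\<alpha> - 1)) \<ge> 0"
    proof (rule conjunct2[OF onesided[OF M' a0, of "{i0, i1}" v j 1]])
      show "\<forall>t. 0 < t \<and> t < 1 \<longrightarrow> (\<Sum>k. p k * g k) + t * (g j + (\<Sum>l\<in>{i0, i1}. v l * g l)) \<le> C"
        using mom0 B(5) by simp
      show "1 + sum v {i0, i1} = 0" using i01 by (simp add: v_def)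
      show "\<forall>k\<in>{i0, i1}. p k > 0" using i01 by (auto simp: P_def)
      show "0 \<notin> {i0, i1}" using i01 P0 by (metis empty_iff insert_iff)
      show "j \<notin> {i0, i1}" using i01 j by auto
      show "j \<noteq> 0" using j by simp
      show "p j = 0" using notP j by simp
    qed simp_all
    hence "(-1 - vm) * c i0 + vm * c i1 \<ge> 0" using a i01 by (simp add: v_def c_def)
    moreover have "(-1 - vm) * c i0 + vm * c i1 = - (aa * g j + bb)"
    proof -
      have "(-1 - vm) * c i0 + vm * c i1 = - c i0 + vm * (c i1 - c i0)" by (simp add: algebra_simps)
      also have "vm * (c i1 - c i0) = aa * (vm * (g i1 - g i0))" unfolding ha[symmetric] by (simp add: algebra_simps)
      also have "\<dots> = aa * (g i0 - g j)" using hv by simp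
      finally show ?thesis by (simp add: bb_def algebra_simps)
    qed
    ultimately show ?thesis by simp
  qed
  have charP: "k \<in> P \<longleftrightarrow> aa * g k + bb > 0" if "k \<ge> 1" for k
  proof
    assume "k \<in> P" thus "aa * g k + bb > 0" using aff cP by metis
  next
    assume "aa * g k + bb > 0" thus "k \<in> P" using outside[OF _ that] by (meson not_le)
  qed
  have aneg: "aa < 0"
  proof (rule ccontr)
    assume "\<not> aa < 0"
    hence an: "aa \<ge> 0" by simp
    have pi0: "p i0 > 0" using i01 by (simp add: P_def)
    have "p \<longlonglongrightarrow> 0" using B(3) by (simp add: sums_iff summable_LIMSEQ_zero)
    hence "\<forall>\<^sub>F k in sequentially. p k < p i0" using pi0 order_tendstoD(2) by blast
    moreover have "\<forall>\<^sub>F k in sequentially. k \<ge> i0" by (rule eventually_ge_at_top)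
    ultimately have "\<forall>\<^sub>F k in sequentially. p k < p i0 \<and> k \<ge> i0" by eventually_elim auto
    then obtain k where k: "p k < p i0" "k \<ge> i0" using eventually_happens'[OF sequentially_bot] by blast
    have k1: "k \<ge> 1" using k i0g by simp
    have "aa * g k + bb \<ge> aa * g i0 + bb" using gmono[OF i0g k(2)] an by (simp add: mult_left_mono)
    hence ge: "aa * g k + bb \<ge> c i0" using aff[OF i01(1)] by simp
    hence "k \<in> P" using charP[OF k1] cP[OF i01(1)] by simp
    hence "c k < c i0" unfolding c_def using k(1) B(2)[of k] a by (intro powr_less_mono2) auto
    thus False using ge aff[OF \<open>k \<in> P\<close>] by simp
  qed
  define r where "r = - bb / aa"
  have Pfin: "finite P"
  proof (rule finite_subset[of _ "{..nat \<lceil>2 powr r\<rceil>}"])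
    show "P \<subseteq> {..nat \<lceil>2 powr r\<rceil>}"
    proof
      fix k assume kP: "k \<in> P"
      have k1: "k \<ge> 1" using Pge1[OF kP] .
      have "aa * g k + bb > 0" using charP[OF k1] kP by simp
      hence "aa * g k > - bb" by simp
      hence "- bb < g k * aa" by (simp add: mult.commute)
      hence "g k < (- bb) / aa" using neg_less_divide_eq[OF aneg, of "g k" "- bb"] by blast
      hence "g k < r" unfolding r_def .
      hence "real k < 2 powr r" using k1 by (simp add: g_def log_less_iff)
      hence "real k \<le> real (nat \<lceil>2 powr r\<rceil>)" by linarith
      thus "k \<in> {..nat \<lceil>2 powr r\<rceil>}" by simp
    qed
  qed simp
  define Kmax where "Kmax = Max P"
  have KP: "Kmax \<in> P" using Pfin iP unfolding Kmax_def by (intro Max_in) auto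
  have K1: "Kmax \<ge> 1" using Pge1[OF KP] .
  have Peq: "P = {1..Kmax}"
  proof (intro set_eqI iffI)
    fix k assume "k \<in> P"
    thus "k \<in> {1..Kmax}" using Pge1 Pfin by (auto simp: Kmax_def)
  next
    fix k assume "k \<in> {1..Kmax}"
    hence k: "k \<ge> 1" "k \<le> Kmax" by auto
    have "aa * g Kmax + bb > 0" using charP[OF K1] KP by simp
    moreover have "aa * g k \<ge> aa * g Kmax" using gmono[OF k] aneg by (simp add: mult_left_mono_neg)
    ultimately have "aa * g k + bb > 0" by simp
    thus "k \<in> P" using charP[OF k(1)] by simp
  qed
  have part1: "\<exists>lam mu::real. lam > 0 \<and>
          (\<forall>k\<ge>1. p k powr (\<alpha> - 1) = max (- (lam * log 2 (real k) + mu) / \<alpha>) 0)"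
  proof -
    have "\<forall>k\<ge>1. p k powr (\<alpha> - 1) = max (- ((- \<alpha> * aa) * log 2 (real k) + (- \<alpha> * bb)) / \<alpha>) 0"
    proof (intro allI impI)
      fix k :: nat assume k: "k \<ge> 1"
      have e: "- ((- \<alpha> * aa) * log 2 (real k) + (- \<alpha> * bb)) / \<alpha> = aa * g k + bb"
        using a0 by (simp add: g_def field_simps)
      show "p k powr (\<alpha> - 1) = max (- ((- \<alpha> * aa) * log 2 (real k) + (- \<alpha> * bb)) / \<alpha>) 0"
      proof (cases "k \<in> P")
        case True
        thus ?thesis unfolding e using aff[OF True] cP[OF True] by (simp add: c_def)
      next
        case False
        thus ?thesis unfolding e using outside[OF False k] notP[OF False] by simp
      qed
    qed
    moreover have "- \<alpha> * aa > 0" using a0 aneg by (simp add: mult_pos_neg)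
    ultimately show ?thesis by blast
  qed
  have part2: "\<exists>Kmax\<ge>1. {k. p k > 0} = {1..Kmax}" using Peq K1 unfolding P_def by blast
  show ?thesis using part1 part2 by blast
qed


theorem mainTheorem6:
  shows
  "(\<forall>(\<alpha>::real) (C::real) (p::nat \<Rightarrow> real).
       1/2 < \<alpha> \<and> \<alpha> < 1 \<and> C > 1 \<and>
       renyi_maximizer \<alpha> (\<lambda>k. real k powr \<alpha>) C p \<longrightarrow>
       (\<exists>lam mu::real. lam > 0 \<and>
          (\<forall>k\<ge>1. p k > 0 \<and> p k powr (\<alpha> - 1) = (lam * real k powr \<alpha> + mu) / \<alpha>)) \<and>
       infinite {k. p k > 0} \<and>
       p \<in> \<Theta>(\<lambda>k. real k powr (- \<alpha> / (1 - \<alpha>))))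
   \<and>
   (\<forall>(\<alpha>::real) (C::real) (p::nat \<Rightarrow> real).
       \<alpha> > 1 \<and> C > 0 \<and>
       renyi_maximizer \<alpha> (\<lambda>k. log 2 (real k)) C p \<longrightarrow>
       (\<exists>lam mu::real. lam > 0 \<and>
          (\<forall>k\<ge>1. p k powr (\<alpha> - 1) = max (- (lam * log 2 (real k) + mu) / \<alpha>) 0)) \<and>
       (\<exists>Kmax\<ge>1. {k. p k > 0} = {1..Kmax}))"
proof (rule conjI; intro allI impI)
  fix \<alpha> C :: real and p :: "nat \<Rightarrow> real"
  assume h: "1/2 < \<alpha> \<and> \<alpha> < 1 \<and> C > 1 \<and> renyi_maximizer \<alpha> (\<lambda>k. real k powr \<alpha>) C p"
  show "(\<exists>lam mu::real. lam > 0 \<and>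
          (\<forall>k\<ge>1. p k > 0 \<and> p k powr (\<alpha> - 1) = (lam * real k powr \<alpha> + mu) / \<alpha>)) \<and>
       infinite {k. p k > 0} \<and>
       p \<in> \<Theta>(\<lambda>k. real k powr (- \<alpha> / (1 - \<alpha>)))"
    using partA h by blast
next
  fix \<alpha> C :: real and p :: "nat \<Rightarrow> real"
  assume h: "\<alpha> > 1 \<and> C > 0 \<and> renyi_maximizer \<alpha> (\<lambda>k. log 2 (real k)) C p"
  show "(\<exists>lam mu::real. lam > 0 \<and>
          (\<forall>k\<ge>1. p k powr (\<alpha> - 1) = max (- (lam * log 2 (real k) + mu) / \<alpha>) 0)) \<and>
       (\<exists>Kmax\<ge>1. {k. p k > 0} = {1..Kmax})"
    using partB h by blast
qed

end
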